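(* Let $a>0$ be constant and consider $\partial_t u+\partial_x(au)=0$ on a periodic 1D mesh. Let $n\ge1$ and $-1=\tau_0<\tau_1<\dots<\tau_n=1$. Consider the Spectral Difference (SD) scheme (context) with flux points $\tau_0,\dots,\tau_n$ and solution points $\sigma_j=\tau_j$ for $j=1,\dots,n$ (the flux points excluding the left endpoint), with the upwind numerical flux. Consider also the FUSE scheme of degree $p=n$ with nodes $r_i=\tau_i$, $i=0,\dots,n$ (context). Then, under the identification $v_{j,k}=u_{j,k}$ for $j=1,\dots,n$ and all elements $k$ (which is a bijection between the unknowns of the two schemes, since $u_{0,k}=u_{n,k-1}$ in FUSE), the two semi-discrete systems of ODEs are identical.
   Context: Mesh: $0=x_0<\dots<x_N=1$, periodic, elements $K_k=[x_{k-1},x_k]$ (indices mod $N$), affine maps $\chi_k(r)=x_{k-1}+\tfrac{r+1}{2}(x_k-x_{k-1})$ from $[-1,1]$ to $K_k$. SD scheme: in each element $K_k$ there are $n$ solution points $\chi_k(\sigma_1),\dots,\chi_k(\sigma_n)$ carrying unknowns $v_{1,k},\dots,v_{n,k}$ (not shared between elements), and $n+1$ flux points $\chi_k(\tau_0),\dots,\chi_k(\tau_n)$ with $\tau_0=-1,\tau_n=1$ (so flux points at element endpoints are repeated in neighbouring elements). Let $v_h^{(k)}$ be the polynomial of degree $\le n-1$ on $K_k$ interpolating $v_{j,k}$ at the solution points. Flux values: at interior flux points ($0<m<n$) the flux is $a\,v_h^{(k)}(\chi_k(\tau_m))$; at element endpoints the upwind numerical flux is used, i.e. at $x_{k-1}$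 (point $\tau_0$ of $K_k$) the value $a\,v_h^{(k-1)}(x_{k-1})$ and at $x_k$ (point $\tau_n$ of $K_k$) the value $a\,v_h^{(k)}(x_k)$. Let $G^{(k)}$ be the polynomial of degree $\le n$ interpolating these $n+1$ flux values at the flux points; the SD update is $\frac{d}{dt}v_{j,k}=-(G^{(k)})'(\chi_k(\sigma_j))$. FUSE scheme of degree $p$ with nodes $-1=r_0<\dots<r_p=1$: nodes $s_{i,k}=\chi_k(r_i)$ with boundary nodes shared ($s_{p,k}=s_{0,k+1}$, single value, so $u_{0,k}=u_{p,k-1}$); $F_h^{(k)}$ is the polynomial of degree $\le p$ interpolating $a\,u_{i,k}$ at $s_{i,k}$, $i=0,\dots,p$; update $\frac{d}{dt}u_{i,k}=-(F_h^{(k)})'(s_{i,k})$ for $1\le i\le p-1$, and at the shared node $s_{p,k}=s_{0,k+1}$ the upwind element is used: since $a>0$, $\frac{d}{dt}u_{p,k}=-(F_h^{(k)})'(s_{p,k})$. *)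

theory Defs
  imports "HOL-Computational_Algebra.Polynomial"
begin

definition interp :: "nat \<Rightarrow> nat set \<Rightarrow> (nat \<Rightarrow> real) \<Rightarrow> (nat \<Rightarrow> real) \<Rightarrow> real poly" where
  "interp d I X Y = (THE p. degree p \<le> d \<and> (\<forall>i\<in>I. poly p (X i) = Y i))"

text \<open>Periodic mesh 0 = x 0 < ... < x N = 1, elements K_k = [x (k-1), x k], k = 1..N.\<close>
definition chi :: "(nat \<Rightarrow> real) \<Rightarrow> nat \<Rightarrow> real \<Rightarrow> real" where
  "chi x k r = x (k - 1) + (r + 1) / 2 * (x k - x (k - 1))"

definition prev_elem :: "nat \<Rightarrow> nat \<Rightarrow> nat" where
  "prev_elem N k = (if k = 1 then N else k - 1)"

text \<open>SD: solution points sigma j = tau j (j=1..n), flux points tau 0..tau n;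
  v j k is the unknown at solution point j of element k.\<close>
definition sd_sol_poly :: "(nat \<Rightarrow> real) \<Rightarrow> nat \<Rightarrow> (nat \<Rightarrow> real) \<Rightarrow> (nat \<Rightarrow> nat \<Rightarrow> real) \<Rightarrow> nat \<Rightarrow> real poly" where
  "sd_sol_poly x n tau v k = interp (n - 1) {1..n} (\<lambda>j. chi x k (tau j)) (\<lambda>j. v j k)"

definition sd_flux_val :: "real \<Rightarrow> (nat \<Rightarrow> real) \<Rightarrow> nat \<Rightarrow> nat \<Rightarrow> (nat \<Rightarrow> real) \<Rightarrow> (nat \<Rightarrow> nat \<Rightarrow> real) \<Rightarrow> nat \<Rightarrow> nat \<Rightarrow> real" where
  "sd_flux_val a x N n tau v k m =
     (if m = 0 then a * poly (sd_sol_poly x n tau v (prev_elem N k)) (chi x (prev_elem N k) 1)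
      else a * poly (sd_sol_poly x n tau v k) (chi x k (tau m)))"

definition sd_flux_poly :: "real \<Rightarrow> (nat \<Rightarrow> real) \<Rightarrow> nat \<Rightarrow> nat \<Rightarrow> (nat \<Rightarrow> real) \<Rightarrow> (nat \<Rightarrow> nat \<Rightarrow> real) \<Rightarrow> nat \<Rightarrow> real poly" where
  "sd_flux_poly a x N n tau v k = interp n {0..n} (\<lambda>m. chi x k (tau m)) (sd_flux_val a x N n tau v k)"

definition sd_rhs :: "real \<Rightarrow> (nat \<Rightarrow> real) \<Rightarrow> nat \<Rightarrow> nat \<Rightarrow> (nat \<Rightarrow> real) \<Rightarrow> (nat \<Rightarrow> nat \<Rightarrow> real) \<Rightarrow> nat \<Rightarrow> nat \<Rightarrow> real" where
  "sd_rhs a x N n tau v j k = - poly (pderiv (sd_flux_poly a x N n tau v k)) (chi x k (tau j))"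

text \<open>FUSE of degree p with nodes r 0..r p; u i k is the unknown at node s_{i,k} = chi x k (r i).\<close>
definition fuse_flux_poly :: "real \<Rightarrow> (nat \<Rightarrow> real) \<Rightarrow> nat \<Rightarrow> (nat \<Rightarrow> real) \<Rightarrow> (nat \<Rightarrow> nat \<Rightarrow> real) \<Rightarrow> nat \<Rightarrow> real poly" where
  "fuse_flux_poly a x p r u k = interp p {0..p} (\<lambda>i. chi x k (r i)) (\<lambda>i. a * u i k)"

text \<open>Right-hand side d/dt u_{i,k} of FUSE for i = 1..p (i = p being the shared node, upwind element k since a > 0).\<close>
definition fuse_rhs :: "real \<Rightarrow> (nat \<Rightarrow> real) \<Rightarrow> nat \<Rightarrow> (nat \<Rightarrow> real) \<Rightarrow> (nat \<Rightarrow> nat \<Rightarrow> real) \<Rightarrow> nat \<Rightarrow> nat \<Rightarrow> real" where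
  "fuse_rhs a x p r u i k = - poly (pderiv (fuse_flux_poly a x p r u k)) (chi x k (r i))"

end

theory Submission
  imports Defs
begin

lemma interp_ex:
  fixes X Y :: "nat \<Rightarrow> real"
  assumes "finite I" "inj_on X I"
  shows "\<exists>p. degree p \<le> card I - 1 \<and> (\<forall>i\<in>I. poly p (X i) = Y i)"
  using assms
proof (induction I rule: finite_induct)
  case empty
  show ?case by (rule exI[of _ 0]) simp
next
  case (insert i I)
  then obtain q where q: "degree q \<le> card I - 1" "\<forall>j\<in>I. poly q (X j) = Y j" by auto
  define w where "w = (\<Prod>j\<in>I. [:- X j, 1:])"
  have wdeg: "degree w \<le> card I"
    unfolding w_def using degree_prod_sum_le[OF insert(1), of "\<lambda>j. [:- X j, 1:]"] by simp
  have wz: "poly w (X j) = 0" if "j \<in> I" for j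
    unfolding w_def poly_prod using that insert(1) by (auto intro: prod_zero)
  have wnz: "poly w (X i) \<noteq> 0"
    unfolding w_def poly_prod using insert by (auto simp: prod_zero_iff)
  define c where "c = (Y i - poly q (X i)) / poly w (X i)"
  define p where "p = q + smult c w"
  have "degree p \<le> max (degree q) (degree (smult c w))" unfolding p_def by (rule degree_add_le_max)
  also have "\<dots> \<le> card I" using q(1) wdeg degree_smult_le[of c w] by auto
  finally have dp: "degree p \<le> card (insert i I) - 1" using insert by simp
  have "\<forall>j\<in>insert i I. poly p (X j) = Y j"
    using q(2) wz wnz by (auto simp: p_def c_def)
  with dp show ?case by blast
qed

lemma interp_poly:
  fixes X Y :: "nat \<Rightarrow> real"
  assumes "finite I" "inj_on X I" "card I = Suc d" "i \<in> I"
  shows "poly (interp d I X Y) (X i) = Y i"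
proof -
  obtain p where p: "degree p \<le> d" "\<forall>i\<in>I. poly p (X i) = Y i"
    using interp_ex[OF assms(1,2), of Y] assms(3) by auto
  have uq: "q = p" if "degree q \<le> d" "\<forall>i\<in>I. poly q (X i) = Y i" for q
  proof (rule poly_eqI_degree[where A = "X ` I"])
    show "\<And>z. z \<in> X ` I \<Longrightarrow> poly q z = poly p z" using that p by auto
    have "card (X ` I) = Suc d" using card_image[OF assms(2)] assms(3) by simp
    then show "degree q < card (X ` I)" "degree p < card (X ` I)" using that p by auto
  qed
  have "degree (interp d I X Y) \<le> d \<and> (\<forall>i\<in>I. poly (interp d I X Y) (X i) = Y i)"
    unfolding interp_def
  proof (rule theI[of _ p])
    show "degree p \<le> d \<and> (\<forall>i\<in>I. poly p (X i) = Y i)" using p by blast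
    show "\<And>q. degree q \<le> d \<and> (\<forall>i\<in>I. poly q (X i) = Y i) \<Longrightarrow> q = p" using uq by blast
  qed
  then show ?thesis using assms(4) by blast
qed

lemma interp_cong:
  assumes "\<And>i. i \<in> I \<Longrightarrow> Y i = Z i"
  shows "interp d I X Y = interp d I X Z"
  unfolding interp_def using assms by simp

lemma tau_mono:
  fixes tau :: "nat \<Rightarrow> real"
  assumes "\<And>i. i < n \<Longrightarrow> tau i < tau (Suc i)"
  shows "i < j \<Longrightarrow> j \<le> n \<Longrightarrow> tau i < tau j"
proof (induction j)
  case 0 then show ?case by simp
next
  case (Suc j)
  then show ?case using assms[of j]
    by (cases "i = j") (auto simp: less_Suc_eq)
qed

theorem mainTheorem3:
  fixes a :: real and x :: "nat \<Rightarrow> real" and N n :: nat and tau :: "nat \<Rightarrow> real"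
    and u v :: "nat \<Rightarrow> nat \<Rightarrow> real"
  assumes "a > 0"
    and "N \<ge> 1" and "x 0 = 0" and "x N = 1" and "\<And>k. k < N \<Longrightarrow> x k < x (Suc k)"
    and "n \<ge> 1" and "tau 0 = -1" and "tau n = 1" and "\<And>i. i < n \<Longrightarrow> tau i < tau (Suc i)"
    and shared: "\<And>k. k \<in> {1..N} \<Longrightarrow> u 0 k = u n (prev_elem N k)"
    and ident: "\<And>j k. j \<in> {1..n} \<Longrightarrow> k \<in> {1..N} \<Longrightarrow> v j k = u j k"
  shows "\<forall>k\<in>{1..N}. \<forall>j\<in>{1..n}. sd_rhs a x N n tau v j k = fuse_rhs a x n tau u j k"
proof (intro ballI)
  have inj: "inj_on (\<lambda>j. chi x k (tau j)) {0..n}" if k: "k \<in> {1..N}" for k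
  proof (rule inj_onI)
    fix i j assume ij: "i \<in> {0..n}" "j \<in> {0..n}" "chi x k (tau i) = chi x k (tau j)"
    have xk: "x (k - 1) < x k" using assms(5)[of "k - 1"] k by auto
    have "tau i * (x k * 2) + tau j * (2 * x (k - Suc 0)) = tau j * (x k * 2) + tau i * (2 * x (k - Suc 0))"
      using ij(3) unfolding chi_def by (simp add: field_simps)
    then have "(tau i - tau j) * (x k - x (k - 1)) = 0" by (simp add: algebra_simps)
    then have "tau i = tau j" using xk by simp
    then show "i = j"
      using tau_mono[of n tau, OF assms(9)] ij(1,2) by (metis atLeastAtMost_iff linorder_neqE_nat less_irrefl)
  qed
  have solv: "poly (sd_sol_poly x n tau v k) (chi x k (tau m)) = v m k"
    if k: "k \<in> {1..N}" and m: "m \<in> {1..n}" for k m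
    unfolding sd_sol_poly_def
    by (rule interp_poly[where X = "\<lambda>j. chi x k (tau j)" and Y = "\<lambda>j. v j k", simplified])
       (use inj[OF k] m assms(6) in \<open>auto intro: inj_on_subset\<close>)
  fix k j assume k: "k \<in> {1..N}" and j: "j \<in> {1..n}"
  have pk: "prev_elem N k \<in> {1..N}" using k assms(2) by (auto simp: prev_elem_def)
  have fv: "sd_flux_val a x N n tau v k m = a * u m k" if m: "m \<in> {0..n}" for m
  proof (cases "m = 0")
    case True
    have "poly (sd_sol_poly x n tau v (prev_elem N k)) (chi x (prev_elem N k) 1) = v n (prev_elem N k)"
      using solv[OF pk, of n] assms(6,8) by simp
    then show ?thesis using True ident[OF _ pk, of n] assms(6) shared[OF k]
      by (simp add: sd_flux_val_def)
  next
    case False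
    then show ?thesis using solv[OF k, of m] m ident[OF _ k, of m]
      by (simp add: sd_flux_val_def)
  qed
  have "sd_flux_poly a x N n tau v k = fuse_flux_poly a x n tau u k"
    unfolding sd_flux_poly_def fuse_flux_poly_def by (rule interp_cong) (use fv in auto)
  then show "sd_rhs a x N n tau v j k = fuse_rhs a x n tau u j k"
    by (simp add: sd_rhs_def fuse_rhs_def)
qed

end
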